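(* Let $\mathcal{R}=(K,\varphi)$ be a rational set of regular languages, with $K\subseteq\Delta^+$ regular and $\varphi:\Delta\to2^{\Sigma^*}$ a regular language substitution such that $\varepsilon\in\varphi(\delta)$ for all $\delta\in\Delta$. Then the set $S(\mathcal{R})=\bigcup_{L\in\mathcal{R}}S(L)$ is finite.
   Context: A regular language substitution is a map $\varphi:\Delta\to2^{\Sigma^*}$ ($\Delta,\Sigma$ alphabets) with each $\varphi(\delta)$ regular, extended to words by $\varphi(\delta\cdot w)=\varphi(\delta)\cdot\varphi(w)$. $(K,\varphi)$ denotes the set $\{\varphi(w)\mid w\in K\}$; such sets with $K\subseteq\Delta^+$ regular are called rational sets of regular languages. For $L\subseteq\Sigma^*$, $S(L)=\{w\in L\setminus\{\varepsilon\}\mid \text{no } w'\in L\setminus\{\varepsilon\} \text{ has } |w'|<|w|\}$. *)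

theory Defs
  imports Main
begin

datatype 'a rexp = Zero | One | Atom 'a | Plus "'a rexp" "'a rexp"
  | Times "'a rexp" "'a rexp" | Star "'a rexp"

definition conc :: "'a list set \<Rightarrow> 'a list set \<Rightarrow> 'a list set" where
  "conc A B = {u @ v | u v. u \<in> A \<and> v \<in> B}"

inductive_set star :: "'a list set \<Rightarrow> 'a list set" for A where
  star_Nil: "[] \<in> star A"
| star_app: "u \<in> A \<Longrightarrow> v \<in> star A \<Longrightarrow> u @ v \<in> star A"

fun lang :: "'a rexp \<Rightarrow> 'a list set" where
  "lang Zero = {}"
| "lang One = {[]}"
| "lang (Atom a) = {[a]}"
| "lang (Plus r s) = lang r \<union> lang s"
| "lang (Times r s) = conc (lang r) (lang s)"
| "lang (Star r) = star (lang r)"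

definition regular :: "'a list set \<Rightarrow> bool" where
  "regular L \<longleftrightarrow> (\<exists>r. lang r = L)"

fun subst_word :: "('d \<Rightarrow> 's list set) \<Rightarrow> 'd list \<Rightarrow> 's list set" where
  "subst_word \<phi> [] = {[]}"
| "subst_word \<phi> (d # w) = conc (\<phi> d) (subst_word \<phi> w)"

definition shortest :: "'a list set \<Rightarrow> 'a list set" where
  "shortest L = {w \<in> L - {[]}. \<not> (\<exists>w' \<in> L - {[]}. length w' < length w)}"

end

theory Submission
  imports Defs
begin

lemma sw_nil: "(\<And>d. [] \<in> \<phi> d) \<Longrightarrow> [] \<in> subst_word \<phi> w"
  by (induction w) (auto simp: conc_def)

lemma sw_sub: "(\<And>d. [] \<in> \<phi> d) \<Longrightarrow> d \<in> set w \<Longrightarrow> u \<in> \<phi> d \<Longrightarrow> u \<in> subst_word \<phi> w"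
proof (induction w)
  case Nil then show ?case by simp
next
  case (Cons a w)
  show ?case
  proof (cases "d = a")
    case True
    have "u @ [] \<in> conc (\<phi> a) (subst_word \<phi> w)"
      unfolding conc_def using Cons.prems True sw_nil[of \<phi> w] by blast
    then show ?thesis by simp
  next
    case False
    then have "u \<in> subst_word \<phi> w" using Cons by simp
    then have "[] @ u \<in> conc (\<phi> a) (subst_word \<phi> w)"
      unfolding conc_def using Cons.prems by blast
    then show ?thesis by simp
  qed
qed

lemma sw_ne: "x \<in> subst_word \<phi> w \<Longrightarrow> x \<noteq> [] \<Longrightarrow> \<exists>d\<in>set w. \<exists>u\<in>\<phi> d. u \<noteq> []"
proof (induction w arbitrary: x)
  case Nil then show ?case by simp
next
  case (Cons a w)
  then obtain u v where "x = u @ v" "u \<in> \<phi> a" "v \<in> subst_word \<phi> w" by (auto simp: conc_def)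
  then show ?case using Cons by (cases "u = []") auto
qed

theorem corollary1:
  fixes K :: "'d::finite list set" and \<phi> :: "'d \<Rightarrow> 's::finite list set"
  assumes "regular K"
    and "[] \<notin> K"
    and "\<And>\<delta>. regular (\<phi> \<delta>)"
    and "\<And>\<delta>. [] \<in> \<phi> \<delta>"
  shows "finite (\<Union>L \<in> subst_word \<phi> ` K. shortest L)"
proof -
  define wd where "wd d = (SOME u. u \<in> \<phi> d \<and> u \<noteq> [])" for d
  define M where "M = Max ((\<lambda>d. length (wd d)) ` UNIV)"
  have "(\<Union>L \<in> subst_word \<phi> ` K. shortest L) \<subseteq> {xs. set xs \<subseteq> UNIV \<and> length xs \<le> M}"
  proof
    fix x assume "x \<in> (\<Union>L \<in> subst_word \<phi> ` K. shortest L)"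
    then obtain w where x: "x \<in> subst_word \<phi> w" "x \<noteq> []"
      and sh: "\<not> (\<exists>w' \<in> subst_word \<phi> w - {[]}. length w' < length x)"
      by (auto simp: shortest_def)
    obtain d u where d: "d \<in> set w" "u \<in> \<phi> d" "u \<noteq> []" using sw_ne[OF x] by blast
    have wd: "wd d \<in> \<phi> d \<and> wd d \<noteq> []" unfolding wd_def by (rule someI[of _ u]) (use d in auto)
    have "wd d \<in> subst_word \<phi> w" using sw_sub[of \<phi> d w "wd d", OF assms(4) d(1)] wd by blast
    then have "length x \<le> length (wd d)" using sh wd by force
    also have "\<dots> \<le> M" unfolding M_def by (rule Max_ge) auto
    finally show "x \<in> {xs. set xs \<subseteq> UNIV \<and> length xs \<le> M}" by simp
  qed
  moreover have "finite {xs::'s list. set xs \<subseteq> UNIV \<and> length xs \<le> M}"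
    by (rule finite_lists_length_le) simp
  ultimately show ?thesis by (rule finite_subset)
qed

end
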